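(* Let $Z=Z(t)$ be the unique formal power series in $t$ with constant term $0$ satisfying $Z=t\frac{(1+Z)^4}{1+Z^2}$. Then $Z$ has non-negative integer coefficients and radius of convergence $1/8$, and can be continued analytically to the domain $\mathcal{D}=\mathbb{C}\setminus[1/8,+\infty)$. Near $t=1/8$, $$Z(t)=1-2(1-8t)^{1/4}+O(\sqrt{1-8t}).$$ Moreover $|Z(t)|<1$ on $\mathcal{D}$. More precisely, the only roots of unity that are accumulation points of $Z(\mathcal{D})$ are $1$ and $-1$, and they are approached by $Z(t)$ only when $t\to1/8$ and when $|t|\to\infty$, respectively. *)

theory Defs
  imports "HOL-Analysis.Analysis" "HOL-Analysis.FPS_Convergence" "HOL-Library.Landau_Symbols"
begin

definition Zeq :: "complex fps \<Rightarrow> bool" where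
  "Zeq Z \<longleftrightarrow> fps_nth Z 0 = 0 \<and> Z = fps_X * (1 + Z) ^ 4 / (1 + Z ^ 2)"

definition Zser :: "complex fps" where
  "Zser = (THE Z. Zeq Z)"

definition slitD :: "complex set" where
  "slitD = - {complex_of_real x | x. x \<ge> 1/8}"

end

theory Submission
  imports Defs "HOL-Complex_Analysis.Complex_Analysis"
begin

lemma sum_Nats: "(\<And>x. x \<in> A \<Longrightarrow> f x \<in> \<nat>) \<Longrightarrow> sum f A \<in> \<nat>"
  by (induction A rule: infinite_finite_induct) auto

lemma Zeq_iff: "Zeq Z \<longleftrightarrow> fps_nth Z 0 = 0 \<and> Z * (1 + Z^2) = fps_X * (1 + Z) ^ 4"
proof -
  have u: "fps_nth (1 + Z^2) 0 \<noteq> 0" if "fps_nth Z 0 = 0" using that by (simp add: power2_eq_square)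
  have i: "inverse (1 + Z^2) * (1 + Z^2) = 1" if "fps_nth Z 0 = 0" using u[OF that] by (rule inverse_mult_eq_1)
  show ?thesis unfolding Zeq_def
  proof safe
    assume a: "fps_nth Z 0 = 0" "Z = fps_X * (1 + Z) ^ 4 / (1 + Z\<^sup>2)"
    have zz: "Z = fps_X * (1 + Z) ^ 4 * inverse (1 + Z^2)"
      using a(2) fps_divide_unit[OF u[OF a(1)]] by (rule trans)
    have "Z * (1 + Z^2) = (fps_X * (1 + Z) ^ 4 * inverse (1 + Z^2)) * (1 + Z^2)"
      by (rule arg_cong[OF zz, of "\<lambda>x. x * (1 + Z^2)"])
    also have "\<dots> = fps_X * (1 + Z) ^ 4" using i[OF a(1)] by (simp add: mult.assoc)
    finally show "Z * (1 + Z^2) = fps_X * (1 + Z) ^ 4" .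
  next
    assume a: "fps_nth Z 0 = 0" "Z * (1 + Z^2) = fps_X * (1 + Z) ^ 4"
    have "fps_X * (1 + Z) ^ 4 / (1 + Z\<^sup>2) = Z * ((1 + Z^2) * inverse (1 + Z^2))"
      using a fps_divide_unit[OF u[OF a(1)]] by (simp add: mult.assoc)
    also have "\<dots> = Z" using i[OF a(1)] by (simp add: mult.commute)
    finally show "Z = fps_X * (1 + Z) ^ 4 / (1 + Z\<^sup>2)" by simp
  qed
qed

lemma Zeq_unique: assumes "Zeq Z1" "Zeq Z2" shows "Z1 = Z2"
proof -
  define D where "D = Z1 - Z2"
  have e1: "Z1 = fps_X * (1 + Z1) ^ 4 - Z1^3" and e2: "Z2 = fps_X * (1 + Z2) ^ 4 - Z2^3"
    using assms by (auto simp: Zeq_iff algebra_simps power2_eq_square power3_eq_cube)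
  define P where "P = (1+Z1)^3 + (1+Z1)^2*(1+Z2) + (1+Z1)*(1+Z2)^2 + (1+Z2)^3"
  define Q where "Q = Z1^2 + Z1*Z2 + Z2^2"
  have "D = fps_X * ((1 + Z1) ^ 4 - (1 + Z2) ^ 4) - (Z1^3 - Z2^3)"
    unfolding D_def using e1 e2 by algebra
  also have "(1 + Z1) ^ 4 - (1 + Z2) ^ 4 = D * P" unfolding D_def P_def by algebra
  also have "Z1^3 - Z2^3 = D * Q" unfolding D_def Q_def by algebra
  finally have "D * (1 - (fps_X * P - Q)) = 0" by (simp add: algebra_simps)
  moreover have "fps_nth Q 0 = 0"
    using assms by (simp add: Zeq_def Q_def power2_eq_square)
  hence h: "fps_nth (1 - (fps_X * P - Q)) 0 \<noteq> 0" by simp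
  have "1 - (fps_X * P - Q) \<noteq> 0"
  proof
    assume a: "1 - (fps_X * P - Q) = 0"
    have "fps_nth (1 - (fps_X * P - Q)) 0 = 0" by (subst a) simp
    with h show False by blast
  qed
  ultimately have "D = 0" by simp
  thus ?thesis unfolding D_def by simp
qed

lemma Zeq_Nats: assumes "Zeq Z" shows "fps_nth Z n \<in> \<nat>"
proof -
  have z0: "fps_nth Z 0 = 0" and e: "Z * (1 + Z^2) = fps_X * (1 + Z) ^ 4" using assms by (auto simp: Zeq_iff)
  define U where "U = 1 + Z^2"
  have u: "fps_nth U 0 \<noteq> 0" using z0 by (simp add: U_def power2_eq_square)
  define B where "B = Z * inverse U"
  have BU: "B * U = Z" unfolding B_def using inverse_mult_eq_1[OF u] by (simp add: mult.assoc)
  have "U^2 * B = U^2 * (fps_X * (1 + 2*B)^2)"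
  proof -
    have "U^2 * B = U * Z" using BU by (simp add: power2_eq_square algebra_simps)
    also have "\<dots> = fps_X * (U + 2 * Z)^2" using e unfolding U_def by (simp add: algebra_simps power2_eq_square power4_eq_xxxx)
    also have "\<dots> = U^2 * (fps_X * (1 + 2*B)^2)" unfolding BU[symmetric] by (simp add: algebra_simps power2_eq_square)
    finally show ?thesis .
  qed
  moreover have "U^2 \<noteq> 0" using u by auto
  ultimately have Beq: "B = fps_X * (1 + 2*B)^2" by simp
  have b0: "fps_nth B 0 = 0" unfolding B_def using z0 by simp
  have BN: "\<forall>k\<le>n. fps_nth B k \<in> \<nat>" for n
  proof (induction n)
    case 0 thus ?case using b0 by simp
  next
    case (Suc m)
    have "fps_nth B (Suc m) = fps_nth ((1 + 2*B)^2) m" by (subst Beq) simp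
    also have "\<dots> \<in> \<nat>" unfolding power2_eq_square fps_mult_nth
      using Suc.IH by (intro sum_Nats) (auto intro!: Nats_mult Nats_add simp: numeral_fps_const)
    finally show ?case using Suc.IH le_Suc_eq by auto
  qed
  have "\<forall>k\<le>n. fps_nth Z k \<in> \<nat>" for n
  proof (induction n)
    case 0 thus ?case using z0 by simp
  next
    case (Suc m)
    have "fps_nth Z (Suc m) = fps_nth (B * U) (Suc m)" using BU by simp
    also have "\<dots> \<in> \<nat>" unfolding fps_mult_nth
    proof (intro sum_Nats)
      fix i assume i: "i \<in> {0..Suc m}"
      show "fps_nth B i * fps_nth U (Suc m - i) \<in> \<nat>"
      proof (cases "i = 0")
        case True thus ?thesis using b0 by simp
      next
        case False
        hence "Suc m - i \<le> m" by simp
        have "fps_nth (Z * Z) (Suc m - i) \<in> \<nat>" unfolding fps_mult_nth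
          using Suc.IH \<open>Suc m - i \<le> m\<close> by (intro sum_Nats Nats_mult) auto
        hence "fps_nth U (Suc m - i) \<in> \<nat>" unfolding U_def power2_eq_square
          by (auto intro!: Nats_add)
        thus ?thesis using BN i by auto
      qed
    qed
    finally show ?case using Suc.IH le_Suc_eq by auto
  qed
  thus ?thesis by auto
qed

lemma rad_mult[simp]: "ereal (norm z) < fps_conv_radius f \<Longrightarrow> ereal (norm z) < fps_conv_radius g \<Longrightarrow> ereal (norm z) < fps_conv_radius (f * g)"
  using fps_conv_radius_mult[of f g] by (meson less_le_trans min_less_iff_conj)
lemma rad_add[simp]: "ereal (norm z) < fps_conv_radius f \<Longrightarrow> ereal (norm z) < fps_conv_radius g \<Longrightarrow> ereal (norm z) < fps_conv_radius (f + g)"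
  using fps_conv_radius_add[of f g] by (meson less_le_trans min_less_iff_conj)
lemma rad_deriv[simp]: "ereal (norm z) < fps_conv_radius (f::complex fps) \<Longrightarrow> ereal (norm z) < fps_conv_radius (fps_deriv f)"
  using fps_conv_radius_deriv[of f] by (meson less_le_trans)

lemma radius_le:
  fixes G :: "complex fps"
  assumes z0: "fps_nth G 0 = 0" and E: "G * (1 + G^2) = fps_X * (1 + G) ^ 4"
  shows "fps_conv_radius G \<le> ereal (1/8)"
proof (rule ccontr)
  define z :: complex where "z = 1/8"
  assume "\<not> ?thesis"
  hence R: "ereal (norm z) < fps_conv_radius G" by (simp add: z_def)
  have E1: "G + G*G*G = fps_X*((1+G)*(1+G)*(1+G)*(1+G))"
  proof -
    have "G + G*G*G = G*(1+G^2)" by (simp add: algebra_simps power2_eq_square)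
    also have "\<dots> = fps_X*((1+G)*(1+G)*(1+G)*(1+G))" unfolding E by (simp add: power4_eq_xxxx mult.assoc)
    finally show ?thesis .
  qed
  have E2: "fps_deriv (G + G*G*G) = fps_deriv (fps_X*((1+G)*(1+G)*(1+G)*(1+G)))" using E1 by (rule arg_cong)
  define h where "h = eval_fps G z"
  define d where "d = eval_fps (fps_deriv G) z"
  have e1: "h + h*h*h = z * ((1+h)*(1+h)*(1+h)*(1+h))"
    using arg_cong[OF E1, of "\<lambda>f. eval_fps f z"] R unfolding h_def
    by (simp add: eval_fps_mult eval_fps_add)
  have e2: "d + (d*h*h + h*(d*h + h*d)) = (1+h)*(1+h)*(1+h)*(1+h) + z * (d*(1+h)*(1+h)*(1+h) + (1+h)*(d*(1+h)*(1+h) + (1+h)*(d*(1+h) + (1+h)*d)))"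
    using arg_cong[OF E2, of "\<lambda>f. eval_fps f z"] R unfolding h_def d_def
    by (simp add: eval_fps_mult eval_fps_add algebra_simps)
  have "(h - 1)^4 = 0" using e1 unfolding z_def by (simp add: field_simps) algebra
  hence "h = 1" by simp
  with e2 show False unfolding z_def by (simp add: algebra_simps)
qed

lemma slitD_iff: "t \<in> slitD \<longleftrightarrow> 1 - 8*t \<notin> \<real>\<^sub>\<le>\<^sub>0"
proof -
  have "t \<notin> slitD \<longleftrightarrow> Im t = 0 \<and> Re t \<ge> 1/8"
    unfolding slitD_def by (auto simp: complex_eq_iff intro!: exI[of _ "Re t"])
  moreover have "1 - 8*t \<in> \<real>\<^sub>\<le>\<^sub>0 \<longleftrightarrow> Im t = 0 \<and> Re t \<ge> 1/8"
    by (auto simp: complex_nonpos_Reals_iff)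
  ultimately show ?thesis by blast
qed

lemma root4_props:
  fixes z :: complex
  assumes z: "z \<notin> \<real>\<^sub>\<le>\<^sub>0"
  defines "w \<equiv> z powr (1/4)"
  shows "w ^ 4 = z" "w ^ 2 = z powr (1/2)" "Re w > 0" "Re (w^2) > 0" "w \<noteq> 0"
proof -
  have nz: "z \<noteq> 0"
  proof
    assume "z = 0"
    moreover have "(0::complex) \<in> \<real>\<^sub>\<le>\<^sub>0" by (simp add: complex_nonpos_Reals_iff)
    ultimately show False using z by simp
  qed
  have w: "w = exp ((1/4) * Ln z)" unfolding w_def powr_def using nz by simp
  have pi1: "Im (Ln z) < pi" using Im_Ln_less_pi[OF z] .
  have pi2: "-pi < Im (Ln z)" by (rule mpi_less_Im_Ln[OF nz])
  have "w ^ 4 = exp (of_nat 4 * ((1/4) * Ln z))" unfolding w exp_of_nat_mult ..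
  also have "\<dots> = z" using nz by simp
  finally show "w ^ 4 = z" .
  have "w ^ 2 = exp (of_nat 2 * ((1/4) * Ln z))" unfolding w exp_of_nat_mult ..
  also have "\<dots> = exp ((1/2) * Ln z)" by simp
  also have "\<dots> = z powr (1/2)" using nz by (simp add: powr_def)
  finally show w2: "w ^ 2 = z powr (1/2)" .
  have "Re w = exp (Re ((1/4) * Ln z)) * cos (Im (Ln z) / 4)" unfolding w Re_exp by simp
  moreover have "cos (Im (Ln z) / 4) > 0" using pi1 pi2 by (intro cos_gt_zero_pi) auto
  ultimately show "Re w > 0" by simp
  thus "w \<noteq> 0" by auto
  have "Re (w^2) = exp (Re ((1/2) * Ln z)) * cos (Im (Ln z) / 2)"
    using w2 nz by (simp add: powr_def Re_exp)
  moreover have "cos (Im (Ln z) / 2) > 0" using pi1 pi2 by (intro cos_gt_zero_pi) auto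
  ultimately show "Re (w^2) > 0" by simp
qed

definition W :: "complex \<Rightarrow> complex" where "W t = (1 - 8*t) powr (1/4)"
definition FF :: "complex \<Rightarrow> complex" where "FF t = (1 - W t) / (1 + W t)"

lemma W_props:
  assumes "t \<in> slitD"
  shows "W t ^ 4 = 1 - 8*t" "W t ^ 2 = (1 - 8*t) powr (1/2)" "Re (W t) > 0" "Re (W t ^ 2) > 0"
        "W t \<noteq> 0" "1 + W t \<noteq> 0"
proof -
  have z: "1 - 8*t \<notin> \<real>\<^sub>\<le>\<^sub>0" using assms slitD_iff by blast
  show "W t ^ 4 = 1 - 8*t" "W t ^ 2 = (1 - 8*t) powr (1/2)" "Re (W t) > 0" "Re (W t ^ 2) > 0" "W t \<noteq> 0"
    unfolding W_def using root4_props[OF z] by auto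
  have "Re (1 + W t) > 0" using root4_props(3)[OF z] by (simp add: W_def)
  thus "1 + W t \<noteq> 0" by (metis zero_complex.sel(1) less_irrefl)
qed

lemma W_holo: "W holomorphic_on slitD"
  unfolding W_def by (intro holomorphic_intros) (auto simp: slitD_iff)

lemma FF_holo: "FF holomorphic_on slitD"
  unfolding FF_def[abs_def] using W_props(6) by (intro holomorphic_intros W_holo) auto

lemma gen: fixes w f :: complex assumes nz: "1 + w \<noteq> 0" and hf: "f * (1 + w) = 1 - w"
  shows "f * (1 + f^2) = ((1 - w^4) / 8) * (1 + f)^4" "1 + f \<noteq> 0" "w = (1 - f)/(1 + f)"
proof -
  have "8 * (1+w)^4 * (f * (1 + f^2)) = 8 * (1+w)^4 * (((1 - w^4) / 8) * (1 + f)^4)"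
  proof -
    have "8 * (1+w)^4 * (f * (1 + f^2)) = 16 * (1 - w^4)" using hf by algebra
    moreover have "8 * (1+w)^4 * (((1 - w^4) / 8) * (1 + f)^4) = (1 - w^4) * ((1+w)*(1+f))^4"
      by (simp add: power_mult_distrib)
    moreover have "(1+w)*(1+f) = 2" using hf by algebra
    ultimately show ?thesis by simp
  qed
  hence "8 * (f * (1 + f^2)) = (1 - w^4) * (1 + f)^4" using nz by simp
  thus "f * (1 + f^2) = ((1 - w^4) / 8) * (1 + f)^4" by (simp add: field_simps mult.commute)
  have "(1+w)*(1+f) = 2" using hf by algebra
  thus "1 + f \<noteq> 0" by auto
  have "1 - f = w*(1+f)" using hf by algebra
  thus "w = (1 - f)/(1 + f)" using \<open>1 + f \<noteq> 0\<close> by simp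
qed

lemma FF_hf: assumes "t \<in> slitD" shows "FF t * (1 + W t) = 1 - W t"
  using W_props(6)[OF assms] unfolding FF_def by simp

lemma FF_eq: assumes "t \<in> slitD" shows "FF t * (1 + FF t ^ 2) = t * (1 + FF t) ^ 4"
proof -
  have t: "t = (1 - W t^4) / 8" using W_props(1)[OF assms] by simp
  show ?thesis using gen(1)[OF W_props(6)[OF assms] FF_hf[OF assms]] t by metis
qed

lemma W_of_FF: assumes "t \<in> slitD" shows "W t = (1 - FF t) / (1 + FF t)"
  using gen(3)[OF W_props(6)[OF assms] FF_hf[OF assms]] .

lemma FF_ne_m1: assumes "t \<in> slitD" shows "1 + FF t \<noteq> 0"
  using gen(2)[OF W_props(6)[OF assms] FF_hf[OF assms]] .

lemma FF_norm: assumes "t \<in> slitD" shows "norm (FF t) < 1"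
proof -
  note p = W_props[OF assms]
  define a where "a = Re (W t)" define b where "b = Im (W t)"
  have "norm (1 - W t) < norm (1 + W t)"
    using p(3) unfolding cmod_def a_def[symmetric] b_def[symmetric]
    by (intro real_sqrt_less_mono) (simp add: a_def b_def power2_eq_square algebra_simps)
  thus ?thesis unfolding FF_def using p(6) by (simp add: norm_divide divide_less_eq)
qed

lemma FF_bigo_pt:
  assumes t: "t \<in> slitD"
  shows "norm (FF t - (1 - 2 * (1 - 8 * t) powr (1/4))) \<le> 2 * norm ((1 - 8 * t) powr (1/2))"
proof -
  define w where "w = W t"
  have hf: "FF t * (1 + w) = 1 - w" using FF_hf[OF t] unfolding w_def .
  have "(FF t - (1 - 2*w)) * (1 + w) = 2 * w^2" using hf by algebra
  hence "norm (FF t - (1 - 2*w)) * norm (1 + w) = 2 * norm (w^2)" by (metis norm_mult norm_numeral)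
  moreover have "norm (1 + w) \<ge> 1"
  proof -
    have "Re (1 + w) \<le> norm (1 + w)" by (rule complex_Re_le_cmod)
    thus ?thesis using W_props(3)[OF t] unfolding w_def by simp
  qed
  moreover have "norm (FF t - (1 - 2*w)) \<le> norm (FF t - (1 - 2*w)) * norm (1 + w)"
    using \<open>norm (1 + w) \<ge> 1\<close> by (simp add: mult_le_cancel_left1)
  ultimately have "norm (FF t - (1 - 2*w)) \<le> 2 * norm (w^2)" by linarith
  thus ?thesis using W_props(2)[OF t] unfolding w_def W_def by simp
qed

lemma FF_bigo: "(\<lambda>t. FF t - (1 - 2 * (1 - 8 * t) powr (1/4))) \<in> O[at (1/8) within slitD](\<lambda>t. (1 - 8 * t) powr (1/2))"
proof (rule bigoI[where c=2])
  show "eventually (\<lambda>t. norm (FF t - (1 - 2 * (1 - 8 * t) powr (1/4))) \<le> 2 * norm ((1 - 8 * t) powr (1/2))) (at (1/8) within slitD)"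
    unfolding eventually_at_filter by (intro always_eventually allI impI FF_bigo_pt)
qed

lemma real_pt:
  fixes r :: real assumes r: "r > 0"
  shows "complex_of_real ((1 - r^4)/8) \<in> slitD" "FF (complex_of_real ((1 - r^4)/8)) = complex_of_real ((1-r)/(1+r))"
proof -
  have a: "1 - 8 * complex_of_real ((1 - r^4)/8) = complex_of_real (r^4)" by (simp add: field_simps)
  show "complex_of_real ((1 - r^4)/8) \<in> slitD"
    unfolding slitD_iff a using r by (simp add: complex_nonpos_Reals_iff)
  have b: "(r^4) powr (1/4) = r"
  proof -
    have "r^4 = r powr (real 4)" using r by (simp add: powr_realpow)
    hence "(r^4) powr (1/4) = r powr (real 4 * (1/4))" by (simp add: powr_powr)
    thus ?thesis using r by simp
  qed
  have "W (complex_of_real ((1 - r^4)/8)) = complex_of_real r"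
    unfolding W_def a using powr_of_real[of "r^4" "1/4"] b r by simp
  thus "FF (complex_of_real ((1 - r^4)/8)) = complex_of_real ((1-r)/(1+r))"
    unfolding FF_def by simp
qed

lemma dist_c1: "dist (complex_of_real x) 1 = \<bar>x - 1\<bar>"
proof -
  have "dist (complex_of_real x) 1 = dist (complex_of_real x) (complex_of_real 1)" by (simp only: of_real_1)
  also have "\<dots> = dist x 1" by (rule dist_of_real)
  finally show ?thesis by (simp add: dist_real_def)
qed
lemma dist_cm1: "dist (complex_of_real x) (-1) = \<bar>x + 1\<bar>"
proof -
  have "dist (complex_of_real x) (-1) = dist (complex_of_real x) (complex_of_real (-1))" by simp
  also have "\<dots> = dist x (-1)" by (rule dist_of_real)
  finally show ?thesis by (simp add: dist_real_def)
qed
lemma limpt_1: "1 islimpt (FF ` slitD)"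
proof (unfold islimpt_approachable, intro allI impI)
  fix e :: real assume e: "e > 0"
  define r where "r = min (e/4) (1/2)"
  have r: "r > 0" "r \<le> e/4" using e by (auto simp: r_def)
  have in1: "complex_of_real ((1-r)/(1+r)) \<in> FF ` slitD" using real_pt[OF r(1)] by (metis image_eqI)
  have ne: "(1-r)/(1+r) \<noteq> 1" using r by (simp add: field_simps)
  have "\<bar>(1-r)/(1+r) - 1\<bar> = 2*r/(1+r)" using r by (simp add: field_simps)
  also have "\<dots> \<le> 2*r" using r by (simp add: field_simps)
  also have "\<dots> < e" using r e by simp
  finally have "dist (complex_of_real ((1-r)/(1+r))) 1 < e"
    by (simp only: dist_c1)
  moreover have "complex_of_real ((1-r)/(1+r)) \<noteq> 1" using ne by (simp only: of_real_eq_1_iff not_False_eq_True)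
  ultimately show "\<exists>x'\<in>FF ` slitD. x' \<noteq> 1 \<and> dist x' 1 < e" using in1 by blast
qed

lemma limpt_m1: "-1 islimpt (FF ` slitD)"
proof (unfold islimpt_approachable, intro allI impI)
  fix e :: real assume e: "e > 0"
  define r where "r = 2/e + 1"
  have "2/e > 0" using e by simp
  hence r: "r > 0" unfolding r_def by linarith
  have in1: "complex_of_real ((1-r)/(1+r)) \<in> FF ` slitD" using real_pt[OF r] by (metis image_eqI)
  have ne: "(1-r)/(1+r) \<noteq> -1" using r by (simp add: field_simps)
  have "\<bar>(1-r)/(1+r) + 1\<bar> = 2/(1+r)" using r by (simp add: field_simps)
  also have "\<dots> < e" using r e unfolding r_def by (simp add: field_simps)
  finally have "dist (complex_of_real ((1-r)/(1+r))) (-1) < e"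
    by (simp only: dist_cm1)
  moreover have "complex_of_real ((1-r)/(1+r)) \<noteq> -1"
  proof
    assume "complex_of_real ((1-r)/(1+r)) = -1"
    hence "complex_of_real ((1-r)/(1+r)) = complex_of_real (-1)" by simp
    hence "(1-r)/(1+r) = -1" by (simp only: of_real_eq_iff)
    with ne show False by simp
  qed
  ultimately show "\<exists>x'\<in>FF ` slitD. x' \<noteq> -1 \<and> dist x' (-1) < e" using in1 by blast
qed

lemma limpt_sub:
  assumes root: "\<exists>n>0. z ^ n = 1" and lp: "z islimpt (FF ` slitD)"
  shows "z = 1 \<or> z = -1"
proof (rule ccontr)
  assume nz: "\<not> (z = 1 \<or> z = -1)"
  have nz1: "1 + z \<noteq> 0"
  proof
    assume "1 + z = 0"
    hence "z = -1" by algebra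
    with nz show False by simp
  qed
  have n1: "norm z = 1"
  proof -
    obtain n where n: "n > 0" "z ^ n = 1" using root by blast
    hence e: "norm z ^ n = 1" by (metis norm_one norm_power)
    show ?thesis
    proof (rule ccontr)
      assume "norm z \<noteq> 1"
      hence "norm z < 1 \<or> norm z > 1" by linarith
      thus False
        using e n power_less_one_iff[of "norm z" n] one_less_power[of "norm z" n] by auto
    qed
  qed
  obtain f where f: "\<And>n. f n \<in> FF ` slitD - {z}" "f \<longlonglongrightarrow> z"
    using lp unfolding islimpt_sequential by blast
  have "\<forall>n. \<exists>t. t \<in> slitD \<and> f n = FF t" using f(1) by blast
  then obtain s where s: "\<And>n. s n \<in> slitD" "\<And>n. f n = FF (s n)" by metis
  define w0 where "w0 = (1 - z) / (1 + z)"
  have "(\<lambda>n. (1 - f n) / (1 + f n)) \<longlonglongrightarrow> w0"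
    unfolding w0_def using nz1 by (intro tendsto_intros f(2)) auto
  moreover have "(\<lambda>n. (1 - f n) / (1 + f n)) = (\<lambda>n. W (s n))"
    using s W_of_FF by auto
  ultimately have lim: "(\<lambda>n. W (s n)) \<longlonglongrightarrow> w0" by simp
  have "(\<lambda>n. Re (W (s n) ^ 2)) \<longlonglongrightarrow> Re (w0 ^ 2)" by (intro tendsto_intros lim)
  hence ge: "0 \<le> Re (w0 ^ 2)"
    by (rule tendsto_lowerbound) (use W_props(4)[OF s(1)] less_imp_le in \<open>auto intro!: always_eventually\<close>)
  have ab: "Re z ^ 2 + Im z ^ 2 = 1" using n1 cmod_power2[of z] by simp
  have "Re w0 = 0" unfolding w0_def Re_divide using ab by (simp add: algebra_simps power2_eq_square)
  hence "Re (w0 ^ 2) = - ((Im w0)^2)" by (simp add: power2_eq_square)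
  with ge have "Im w0 = 0" by simp
  with \<open>Re w0 = 0\<close> have "w0 = 0" by (simp add: complex_eq_iff)
  hence "z = 1" unfolding w0_def using nz1 by simp
  with nz show False by simp
qed

lemma limpt_set: "{w. (\<exists>n>0. w ^ n = 1) \<and> w islimpt (FF ` slitD)} = {1, -1}"
proof
  show "{w. (\<exists>n>0. w ^ n = 1) \<and> w islimpt (FF ` slitD)} \<subseteq> {1, -1}" using limpt_sub by blast
  have "(1::complex) ^ 1 = 1" "(-1::complex) ^ 2 = 1" by simp_all
  thus "{1, -1} \<subseteq> {w. (\<exists>n>0. w ^ n = 1) \<and> w islimpt (FF ` slitD)}"
    using limpt_1 limpt_m1 by (auto intro!: exI[of _ "1::nat"] exI[of _ "2::nat"])
qed

lemma seq1:
  assumes s: "\<forall>n. s n \<in> slitD" and l: "(\<lambda>n. FF (s n)) \<longlonglongrightarrow> 1"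
  shows "s \<longlonglongrightarrow> 1/8"
proof -
  have eq: "s = (\<lambda>n. (1 - ((1 - FF (s n))/(1 + FF (s n)))^4)/8)"
  proof
    fix n
    have "W (s n) ^ 4 = 1 - 8 * s n" using W_props(1) s by blast
    thus "s n = (1 - ((1 - FF (s n))/(1 + FF (s n)))^4)/8" using W_of_FF s by auto
  qed
  have "(\<lambda>n. (1 - ((1 - FF (s n))/(1 + FF (s n)))^4)/8) \<longlonglongrightarrow> (1 - ((1 - 1)/(1 + 1))^4)/8"
    by (intro tendsto_intros l) simp_all
  thus ?thesis using eq by simp
qed

lemma seq2:
  assumes s: "\<forall>n. s n \<in> slitD" and l: "(\<lambda>n. FF (s n)) \<longlonglongrightarrow> -1"
  shows "filterlim (\<lambda>n. cmod (s n)) at_top sequentially"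
proof -
  define v where "v n = (1 + FF (s n)) / (1 - FF (s n))" for n
  have "v \<longlonglongrightarrow> (1 + -1) / (1 - -1)" unfolding v_def by (intro tendsto_intros l) simp
  hence v0: "v \<longlonglongrightarrow> 0" by simp
  have prod: "W (s n) * v n = 1" for n
  proof -
    have a: "1 + FF (s n) \<noteq> 0" using FF_ne_m1 s by blast
    have "W (s n) \<noteq> 0" using W_props(5) s by blast
    hence b: "1 - FF (s n) \<noteq> 0" using W_of_FF s by force
    show ?thesis using a b W_of_FF s unfolding v_def by simp
  qed
  show ?thesis unfolding filterlim_at_top
  proof
    fix Z :: real
    define d where "d = 1 / (8 * \<bar>Z\<bar> + 2)"
    have d: "d > 0" by (simp add: d_def)
    have "(\<lambda>n. norm (v n)) \<longlonglongrightarrow> 0" using v0 by (rule tendsto_norm_zero)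
    hence "eventually (\<lambda>n. norm (v n) < d) sequentially" using d by (rule order_tendstoD(2))
    thus "eventually (\<lambda>n. Z \<le> cmod (s n)) sequentially"
    proof eventually_elim
      case (elim n)
      have pn: "norm (W (s n)) * norm (v n) = 1" using prod[of n] by (metis norm_mult norm_one)
      have "norm (v n) \<noteq> 0" using pn by (cases "norm (v n) = 0") auto
      hence vpos: "norm (v n) > 0" by simp
      have "norm (W (s n)) = 1 / norm (v n)" using pn vpos by (simp add: field_simps)
      also have "\<dots> > 1 / d" using elim vpos d by (simp add: frac_less2)
      finally have big: "norm (W (s n)) > 8 * \<bar>Z\<bar> + 2" unfolding d_def by simp
      have "norm (W (s n)) \<le> norm (W (s n)) ^ 4" using big by (simp add: power_increasing[of 1 4, simplified])
      also have "\<dots> = norm (1 - 8 * s n)" using W_props(1) s by (metis norm_power)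
      also have "\<dots> \<le> 1 + 8 * norm (s n)" using norm_triangle_ineq4[of 1 "8 * s n"] by (simp add: norm_mult)
      finally show ?case using big by linarith
    qed
  qed
qed

lemma ball_sub: "ball 0 (1/8) \<subseteq> slitD"
proof
  fix t :: complex assume "t \<in> ball 0 (1/8)"
  hence n: "norm t < 1/8" by simp
  show "t \<in> slitD"
  proof (unfold slitD_iff complex_nonpos_Reals_iff, rule notI)
    assume "Re (1 - 8 * t) \<le> 0 \<and> Im (1 - 8 * t) = 0"
    hence "Re t \<ge> 1/8" by simp
    moreover have "Re t \<le> norm t" by (rule complex_Re_le_cmod)
    ultimately show False using n by simp
  qed
qed

theorem lemma11:
  shows "(\<exists>!Z. Zeq Z)
    \<and> (\<forall>n. fps_nth Zser n \<in> \<nat>)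
    \<and> fps_conv_radius Zser = ereal (1/8)
    \<and> (\<exists>F. F holomorphic_on slitD
         \<and> (\<forall>t\<in>ball 0 (1/8). F t = eval_fps Zser t)
         \<and> (\<lambda>t. F t - (1 - 2 * (1 - 8 * t) powr (1/4)))
              \<in> O[at (1/8) within slitD](\<lambda>t. (1 - 8 * t) powr (1/2))
         \<and> (\<forall>t\<in>slitD. cmod (F t) < 1)
         \<and> {w. (\<exists>n>0. w ^ n = 1) \<and> w islimpt (F ` slitD)} = {1, -1}
         \<and> (\<forall>s. (\<forall>n. s n \<in> slitD) \<longrightarrow> (\<lambda>n. F (s n)) \<longlonglongrightarrow> 1 \<longrightarrow> s \<longlonglongrightarrow> 1/8)
         \<and> (\<forall>s. (\<forall>n. s n \<in> slitD) \<longrightarrow> (\<lambda>n. F (s n)) \<longlonglongrightarrow> -1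
                 \<longrightarrow> filterlim (\<lambda>n. cmod (s n)) at_top sequentially))"
proof -
  define G where "G = fps_expansion FF 0"
  have holo: "FF holomorphic_on ball 0 (1/8)" using FF_holo ball_sub by (rule holomorphic_on_subset)
  have holoe: "FF holomorphic_on eball 0 (ereal (1/8))" using holo by simp
  have hasG: "FF has_fps_expansion G" unfolding G_def
    by (rule has_fps_expansion_fps_expansion[OF open_ball _ holo]) simp
  have ev: "eventually (\<lambda>z. z \<in> ball 0 (1/8)) (nhds (0::complex))"
    by (intro eventually_nhds_in_open) auto
  have h1: "(\<lambda>z. FF z * (1 + FF z ^ 2)) has_fps_expansion G * (1 + G^2)"
    by (intro fps_expansion_intros hasG)
  have h2: "(\<lambda>z. z * (1 + FF z) ^ 4) has_fps_expansion fps_X * (1 + G)^4"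
    by (intro fps_expansion_intros hasG)
  have evq: "eventually (\<lambda>z. FF z * (1 + FF z ^ 2) = z * (1 + FF z) ^ 4) (nhds 0)"
    using ev by eventually_elim (use FF_eq ball_sub in blast)
  have h2': "(\<lambda>z. FF z * (1 + FF z ^ 2)) has_fps_expansion fps_X * (1 + G)^4"
    using h2 has_fps_expansion_cong[OF evq refl] by simp
  have E: "G * (1 + G^2) = fps_X * (1 + G)^4" by (rule fps_expansion_unique_complex[OF h1 h2'])
  have FF0: "FF 0 = 0" by (simp add: FF_def W_def)
  have G0: "fps_nth G 0 = 0" using fps_nth_fps_expansion[OF hasG, of 0] FF0 by simp
  have ZG: "Zeq G" by (simp add: Zeq_iff G0 E)
  have uniq: "\<exists>!Z. Zeq Z" using ZG Zeq_unique by blast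
  have Zs: "Zser = G" unfolding Zser_def using ZG Zeq_unique by (intro the_equality) auto
  have nats: "\<forall>n. fps_nth Zser n \<in> \<nat>" using Zeq_Nats[OF ZG] Zs by simp
  have r1: "fps_conv_radius G \<ge> ereal (1/8)" unfolding G_def by (rule conv_radius_fps_expansion[OF holoe])
  have r2: "fps_conv_radius G \<le> ereal (1/8)" by (rule radius_le[OF G0 E])
  have rad: "fps_conv_radius Zser = ereal (1/8)" using r1 r2 Zs by simp
  have evl: "\<forall>t\<in>ball 0 (1/8). FF t = eval_fps Zser t"
  proof
    fix t :: complex assume "t \<in> ball 0 (1/8)"
    hence "ereal (norm t) < ereal (1/8)" by simp
    from eval_fps_expansion'[OF holoe this] show "FF t = eval_fps Zser t" unfolding Zs G_def by simp
  qed
  have F: "FF holomorphic_on slitD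
         \<and> (\<forall>t\<in>ball 0 (1/8). FF t = eval_fps Zser t)
         \<and> (\<lambda>t. FF t - (1 - 2 * (1 - 8 * t) powr (1/4)))
              \<in> O[at (1/8) within slitD](\<lambda>t. (1 - 8 * t) powr (1/2))
         \<and> (\<forall>t\<in>slitD. cmod (FF t) < 1)
         \<and> {w. (\<exists>n>0. w ^ n = 1) \<and> w islimpt (FF ` slitD)} = {1, -1}
         \<and> (\<forall>s. (\<forall>n. s n \<in> slitD) \<longrightarrow> (\<lambda>n. FF (s n)) \<longlonglongrightarrow> 1 \<longrightarrow> s \<longlonglongrightarrow> 1/8)
         \<and> (\<forall>s. (\<forall>n. s n \<in> slitD) \<longrightarrow> (\<lambda>n. FF (s n)) \<longlonglongrightarrow> -1
                 \<longrightarrow> filterlim (\<lambda>n. cmod (s n)) at_top sequentially)"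
    using FF_holo evl FF_bigo FF_norm limpt_set seq1 seq2 by blast
  show ?thesis using uniq nats rad F by blast
qed

end
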